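(* Let $\mathcal{X}$ be an infinite instance domain, $l\ge0$ an integer, and $\mathcal{C}^l$ the class of unions of at most $l$ singletons. Then for every integer $k\ge0$, \[ \mathrm{ELdim}(\mathcal{C}^l,k)=\sup\Big\{t:\binom{t}{\le k+1}\le\binom{t}{\le l}\Big\}=\begin{cases}\infty,& k\le l-1,\\ l,& k\ge l.\end{cases} \]
   Context: $\mathcal{C}^l$ is the class of functions $\mathcal{X}\to\{-1,+1\}$ of the form $x\mapsto1-2I(x\in D)$ with $D\subseteq\mathcal{X}$, $|D|\le l$. $\binom{t}{\le j}=\sum_{i=0}^{j}\binom{t}{i}$. Extended mistake tree w.r.t. a class $\mathcal{H}$: a finite full binary tree (possibly a single leaf) in which each internal node $v$ is labeled by $x_v\in\mathcal{X}$ and has two solid downward edges, to its left child (label $-1$) and right child (label $+1$), plus one dashed downward edge to one of its two children; each leaf is labeled by some $h\in\mathcal{H}$ with $h(x_v)$ equal to the direction label at every internal node $v$ on the root-to-leaf path. A root-to-leaf path chooses at each internal node one downward edge; its length is its number of edges. The tree is $(k,m)$-difficult if every root-to-leaf path using at most $k$ solid edges has length at least $m$. $\mathrm{ELdim}(\mathcal{H},k)$ is the supremum of $m$ such that a $(k,m)$-difficult extended mistake tree w.r.t. $\mathcal{H}$ exists. *)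

theory Defs
  imports Main "HOL-Library.Extended_Nat"
begin

definition Cl :: "nat \<Rightarrow> ('a \<Rightarrow> int) set" where
  "Cl l = {h. \<exists>D. finite D \<and> card D \<le> l \<and> h = (\<lambda>x. if x \<in> D then -1 else 1)}"

definition choose_le :: "nat \<Rightarrow> nat \<Rightarrow> nat" where
  "choose_le t j = (\<Sum>i\<le>j. t choose i)"

text \<open>Extended mistake trees: a node carries its label x, its left child (direction -1),
  its right child (direction +1), and a boolean telling where the dashed edge goes
  (True = right child, False = left child).\<close>
datatype 'a emtree = Leaf "'a \<Rightarrow> int" | Node 'a "'a emtree" "'a emtree" bool

fun emtree_ok :: "('a \<Rightarrow> int) set \<Rightarrow> ('a \<times> int) list \<Rightarrow> 'a emtree \<Rightarrow> bool" where
  "emtree_ok H cs (Leaf h) = (h \<in> H \<and> (\<forall>(x, y) \<in> set cs. h x = y))"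
| "emtree_ok H cs (Node x l r d) =
     (emtree_ok H ((x, -1) # cs) l \<and> emtree_ok H ((x, 1) # cs) r)"

definition ext_mistake_tree :: "('a \<Rightarrow> int) set \<Rightarrow> 'a emtree \<Rightarrow> bool" where
  "ext_mistake_tree H t = emtree_ok H [] t"

text \<open>Root-to-leaf paths, recorded as pairs (number of solid edges, length).\<close>
fun emtree_paths :: "'a emtree \<Rightarrow> (nat \<times> nat) set" where
  "emtree_paths (Leaf h) = {(0, 0)}"
| "emtree_paths (Node x l r d) =
     {(Suc s, Suc n) | s n. (s, n) \<in> emtree_paths l \<union> emtree_paths r}
   \<union> {(s, Suc n) | s n. (s, n) \<in> emtree_paths (if d then r else l)}"

definition difficult :: "nat \<Rightarrow> nat \<Rightarrow> 'a emtree \<Rightarrow> bool" where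
  "difficult k m t = (\<forall>(s, n) \<in> emtree_paths t. s \<le> k \<longrightarrow> m \<le> n)"

definition ELdim :: "('a \<Rightarrow> int) set \<Rightarrow> nat \<Rightarrow> enat" where
  "ELdim H k = Sup {enat m | m. \<exists>t. ext_mistake_tree H t \<and> difficult k m t}"

end

theory Submission
  imports Defs
begin

lemma ok_consistent: "emtree_ok H cs t \<Longrightarrow> \<exists>h\<in>H. \<forall>(x,y)\<in>set cs. h x = y"
proof (induction t arbitrary: cs)
  case (Node x t1 t2 d)
  then obtain h where "h \<in> H" "\<forall>(a,b)\<in>set ((x,-1)#cs). h a = b" by (meson emtree_ok.simps(2))
  then show ?case by auto
qed auto

lemma upper_path:
  assumes "emtree_ok (Cl l) cs t" "A = {x. (x, -1) \<in> set cs}"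
  shows "\<exists>m. (m, m) \<in> emtree_paths t \<and> m + card A \<le> l \<and> finite A"
  using assms
proof (induction t arbitrary: cs A)
  case (Leaf h)
  then obtain D where D: "finite D" "card D \<le> l" "h = (\<lambda>x. if x \<in> D then -1 else 1)"
    by (auto simp: Cl_def)
  have "A \<subseteq> D" using Leaf D by (auto split: if_splits)
  hence "card A \<le> card D" "finite A" using D card_mono finite_subset by auto
  thus ?case using D by auto
next
  case (Node x t1 t2 d)
  have xA: "x \<notin> A"
  proof
    assume "x \<in> A"
    from Node.prems have "emtree_ok (Cl l) ((x, 1) # cs) t2" by simp
    from ok_consistent[OF this] obtain h where "\<forall>(a,b)\<in>set ((x, 1) # cs). h a = b" by blast
    with \<open>x \<in> A\<close> Node.prems(2) show False by fastforce
  qed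
  have "emtree_ok (Cl l) ((x, -1) # cs) t1" using Node.prems by simp
  moreover have "insert x A = {y. (y, -1) \<in> set ((x, -1) # cs)}" using Node.prems(2) by auto
  ultimately obtain m where m: "(m, m) \<in> emtree_paths t1" "m + card (insert x A) \<le> l"
    "finite (insert x A)"
    using Node.IH(1) by blast
  have "(Suc m, Suc m) \<in> emtree_paths (Node x t1 t2 d)" using m(1) by auto
  moreover have "Suc m + card A \<le> l" using m xA by simp
  ultimately show ?case using m(3) by (metis finite_insert)
qed

lemma paths_le: "(s, n) \<in> emtree_paths t \<Longrightarrow> s \<le> n"
proof (induction t arbitrary: s n)
  case (Node x t1 t2 d)
  from Node.prems show ?case
    by (auto split: if_splits dest: Node.IH)
qed simp

fun bld :: "(nat \<Rightarrow> 'a) \<Rightarrow> nat \<Rightarrow> nat \<Rightarrow> nat \<Rightarrow> 'a set \<Rightarrow> 'a emtree" where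
  "bld f j 0 c D = Leaf (\<lambda>x. if x \<in> D then -1 else 1)"
| "bld f j (Suc m) 0 D = Leaf (\<lambda>x. if x \<in> D then -1 else 1)"
| "bld f j (Suc m) (Suc c) D =
     Node (f j) (bld f (Suc j) m c (insert (f j) D)) (bld f (Suc j) m (Suc c) D) True"

lemma bld_paths: "(s, n) \<in> emtree_paths (bld f j m c D) \<Longrightarrow> m \<le> n \<or> c \<le> s"
proof (induction f j m c D arbitrary: s n rule: bld.induct)
  case (3 f j m c D)
  then show ?case by (auto; fastforce)
qed auto

lemma bld_ok:
  assumes "inj f" "finite D" "card D + c \<le> l" "D \<subseteq> f ` {..<j}"
    "\<forall>(x,y)\<in>set cs. (y = -1 \<and> x \<in> D) \<or> (y = 1 \<and> x \<in> f ` {..<j} \<and> x \<notin> D)"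
  shows "emtree_ok (Cl l) cs (bld f j m c D)"
  using assms
proof (induction f j m c D arbitrary: cs rule: bld.induct)
  case (1 f j c D)
  then show ?case by (auto simp: Cl_def split: if_splits; fastforce)
next
  case (2 f j m D)
  then show ?case by (auto simp: Cl_def split: if_splits; fastforce)
next
  case (3 f j m c D)
  have fj: "f j \<notin> f ` {..<j}" using 3(3) by (auto simp: inj_eq)
  hence fjD: "f j \<notin> D" using 3(6) by auto
  have L: "emtree_ok (Cl l) ((f j, -1) # cs) (bld f (Suc j) m c (insert (f j) D))"
  proof (rule 3(1))
    show "inj f" "finite (insert (f j) D)" using 3 by auto
    show "card (insert (f j) D) + c \<le> l" using 3(4,5) fjD by simp
    show "insert (f j) D \<subseteq> f ` {..<Suc j}" using 3(6) by auto
    show "\<forall>(x,y)\<in>set ((f j, -1) # cs). (y = -1 \<and> x \<in> insert (f j) D) \<or>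
        (y = 1 \<and> x \<in> f ` {..<Suc j} \<and> x \<notin> insert (f j) D)"
      using 3(7) fj by (fastforce simp: less_Suc_eq)
  qed
  have R: "emtree_ok (Cl l) ((f j, 1) # cs) (bld f (Suc j) m (Suc c) D)"
  proof (rule 3(2))
    show "inj f" "finite D" "card D + Suc c \<le> l" using 3 by auto
    show "D \<subseteq> f ` {..<Suc j}" using 3(6) by auto
    show "\<forall>(x,y)\<in>set ((f j, 1) # cs). (y = -1 \<and> x \<in> D) \<or>
        (y = 1 \<and> x \<in> f ` {..<Suc j} \<and> x \<notin> D)"
      using 3(7) fjD by (fastforce simp: less_Suc_eq)
  qed
  show ?case using L R by simp
qed

lemma enat_Sup_inf: assumes "\<And>m. enat m \<in> A" shows "Sup A = (\<infinity>::enat)"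
proof (cases "Sup A")
  case (enat n)
  have "enat (Suc n) \<le> Sup A" using assms by (rule Sup_upper)
  with enat show ?thesis by simp
qed simp

lemma enat_Sup_eq: assumes "enat l \<in> A" "\<And>x. x \<in> A \<Longrightarrow> x \<le> enat l" shows "Sup A = enat l"
  using assms by (meson Sup_least Sup_upper antisym)

lemma choose_le_split: "l \<le> j \<Longrightarrow> choose_le t j = choose_le t l + (\<Sum>i\<in>{l<..j}. t choose i)"
proof -
  assume "l \<le> j"
  hence "{..j} = {..l} \<union> {l<..j}" by auto
  hence "(\<Sum>i\<le>j. t choose i) = (\<Sum>i\<in>{..l} \<union> {l<..j}. t choose i)" by simp
  also have "\<dots> = (\<Sum>i\<le>l. t choose i) + (\<Sum>i\<in>{l<..j}. t choose i)"
    by (rule sum.union_disjoint) auto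
  finally show ?thesis unfolding choose_le_def .
qed

theorem mainTheorem10:
  fixes l k :: nat
  assumes "infinite (UNIV :: 'a set)"
  shows "ELdim (Cl l :: ('a \<Rightarrow> int) set) k
           = Sup {enat t | t. choose_le t (k + 1) \<le> choose_le t l}
       \<and> ELdim (Cl l :: ('a \<Rightarrow> int) set) k = (if k < l then \<infinity> else enat l)"
proof -
  obtain f :: "nat \<Rightarrow> 'a" where f: "inj f" using infinite_countable_subset[OF assms] by blast
  define S where "S = {enat m | m. \<exists>t. ext_mistake_tree (Cl l :: ('a \<Rightarrow> int) set) t \<and> difficult k m t}"
  have ok: "ext_mistake_tree (Cl l) (bld f 0 m l {})" for m
    unfolding ext_mistake_tree_def by (rule bld_ok[OF f]) auto
  have E: "ELdim (Cl l :: ('a \<Rightarrow> int) set) k = (if k < l then \<infinity> else enat l)"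
  proof (cases "k < l")
    case True
    have "enat m \<in> S" for m
    proof -
      have "difficult k m (bld f 0 m l {})"
        unfolding difficult_def using bld_paths True by fastforce
      thus ?thesis using ok unfolding S_def by blast
    qed
    hence "Sup S = \<infinity>" by (rule enat_Sup_inf)
    thus ?thesis using True by (simp add: ELdim_def S_def)
  next
    case False
    have "enat l \<in> S"
    proof -
      have "difficult k l (bld f 0 l l {})"
        unfolding difficult_def using bld_paths paths_le by fastforce
      thus ?thesis using ok unfolding S_def by blast
    qed
    moreover have "x \<le> enat l" if "x \<in> S" for x
    proof -
      from that obtain m t where x: "x = enat m" "ext_mistake_tree (Cl l :: ('a \<Rightarrow> int) set) t"
        "difficult k m t" unfolding S_def by blast
      from upper_path[of l "[]" t "{}"] x(2) obtain n where
        n: "(n, n) \<in> emtree_paths t" "n \<le> l" by (auto simp: ext_mistake_tree_def)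
      with x(3) False have "m \<le> n" unfolding difficult_def by fastforce
      with n x show ?thesis by simp
    qed
    ultimately have "Sup S = enat l" by (rule enat_Sup_eq)
    thus ?thesis using False by (simp add: ELdim_def S_def)
  qed
  have C: "Sup {enat t | t. choose_le t (k + 1) \<le> choose_le t l} = (if k < l then \<infinity> else enat l)"
  proof (cases "k < l")
    case True
    have "choose_le t (k + 1) \<le> choose_le t l" for t
      using choose_le_split[of "k+1" l t] True by simp
    hence "Sup {enat t | t. choose_le t (k + 1) \<le> choose_le t l} = \<infinity>"
      by (intro enat_Sup_inf) blast
    thus ?thesis using True by simp
  next
    case False
    have iff: "choose_le t (Suc k) \<le> choose_le t l \<longleftrightarrow> t \<le> l" for t
    proof -
      have "choose_le t (Suc k) \<le> choose_le t l \<longleftrightarrow> (\<Sum>i\<in>{l<..Suc k}. t choose i) = 0"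
        using choose_le_split[of l "Suc k" t] False by simp
      also have "\<dots> \<longleftrightarrow> (\<forall>i\<in>{l<..Suc k}. t < i)" by simp
      also have "\<dots> \<longleftrightarrow> t \<le> l"
      proof
        assume "\<forall>i\<in>{l<..Suc k}. t < i"
        moreover have "Suc l \<in> {l<..Suc k}" using False by simp
        ultimately show "t \<le> l" by fastforce
      qed auto
      finally show ?thesis .
    qed
    have "Sup {enat t | t. choose_le t (k + 1) \<le> choose_le t l} = enat l"
      by (rule enat_Sup_eq) (auto simp: iff)
    thus ?thesis using False by simp
  qed
  show ?thesis using E C by simp
qed

end
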